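(* Let $G$ be a fullerene graph and $S$ a perfect star packing of $G$. Then the number of connected components of $G-C(S)$ that are cycles of odd length is even.
   Context: A fullerene graph is a finite simple connected (equivalently, $3$-connected) plane cubic graph all of whose faces are pentagons or hexagons. A perfect star packing of $G$ is a spanning subgraph $S$ of $G$ every connected component of which is isomorphic to $K_{1,3}$; $C(S)$ denotes the set of centers (degree-$3$ vertices) of the stars in $S$. (Every connected component of $G-C(S)$ is a cycle.) *)

theory Defs
  imports Main
begin

definition simple_graph :: "'a set \<Rightarrow> ('a \<Rightarrow> 'a \<Rightarrow> bool) \<Rightarrow> bool" where
  "simple_graph V E \<longleftrightarrow> finite V \<and> (\<forall>u v. E u v \<longrightarrow> u \<in> V \<and> v \<in> V)
     \<and> (\<forall>u v. E u v \<longrightarrow> E v u) \<and> (\<forall>v. \<not> E v v)"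

definition nbrs :: "('a \<Rightarrow> 'a \<Rightarrow> bool) \<Rightarrow> 'a \<Rightarrow> 'a set" where
  "nbrs E v = {w. E v w}"

definition cubic :: "'a set \<Rightarrow> ('a \<Rightarrow> 'a \<Rightarrow> bool) \<Rightarrow> bool" where
  "cubic V E \<longleftrightarrow> (\<forall>v\<in>V. card (nbrs E v) = 3)"

definition connected_graph :: "'a set \<Rightarrow> ('a \<Rightarrow> 'a \<Rightarrow> bool) \<Rightarrow> bool" where
  "connected_graph V E \<longleftrightarrow> V \<noteq> {} \<and> (\<forall>u\<in>V. \<forall>v\<in>V. E\<^sup>*\<^sup>* u v)"

definition edges :: "('a \<Rightarrow> 'a \<Rightarrow> bool) \<Rightarrow> 'a set set" where
  "edges E = {{u, v} | u v. E u v}"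

(* Combinatorial embedding (rotation system): rot v is a cyclic permutation of the
   neighbours of v. *)
definition rotation_system :: "'a set \<Rightarrow> ('a \<Rightarrow> 'a \<Rightarrow> bool) \<Rightarrow> ('a \<Rightarrow> 'a \<Rightarrow> 'a) \<Rightarrow> bool" where
  "rotation_system V E rot \<longleftrightarrow>
     (\<forall>v\<in>V. \<forall>u. E v u \<longrightarrow> E v (rot v u)) \<and>
     (\<forall>v\<in>V. \<forall>u w. E v u \<and> E v w \<longrightarrow> (\<exists>n. (rot v ^^ n) u = w))"

definition darts :: "('a \<Rightarrow> 'a \<Rightarrow> bool) \<Rightarrow> ('a \<times> 'a) set" where
  "darts E = {(u, v). E u v}"

(* face-tracing permutation on darts *)
definition face_step :: "('a \<Rightarrow> 'a \<Rightarrow> 'a) \<Rightarrow> 'a \<times> 'a \<Rightarrow> 'a \<times> 'a" where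
  "face_step rot d = (snd d, rot (snd d) (fst d))"

definition face_of :: "('a \<Rightarrow> 'a \<Rightarrow> 'a) \<Rightarrow> 'a \<times> 'a \<Rightarrow> ('a \<times> 'a) set" where
  "face_of rot d = {(face_step rot ^^ n) d | n. True}"

definition faces :: "('a \<Rightarrow> 'a \<Rightarrow> bool) \<Rightarrow> ('a \<Rightarrow> 'a \<Rightarrow> 'a) \<Rightarrow> ('a \<times> 'a) set set" where
  "faces E rot = face_of rot ` darts E"

(* plane embedding of a connected graph: rotation system of genus 0 (Euler's formula) *)
definition plane_embedding :: "'a set \<Rightarrow> ('a \<Rightarrow> 'a \<Rightarrow> bool) \<Rightarrow> ('a \<Rightarrow> 'a \<Rightarrow> 'a) \<Rightarrow> bool" where
  "plane_embedding V E rot \<longleftrightarrow> rotation_system V E rot \<and>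
     int (card V) - int (card (edges E)) + int (card (faces E rot)) = 2"

(* a face is a pentagon/hexagon: its boundary walk has length 5 or 6 and visits
   distinct vertices (so it is a 5- or 6-cycle) *)
definition penta_hexa_face :: "('a \<times> 'a) set \<Rightarrow> bool" where
  "penta_hexa_face f \<longleftrightarrow> card f \<in> {5, 6} \<and> card (fst ` f) = card f"

definition fullerene :: "'a set \<Rightarrow> ('a \<Rightarrow> 'a \<Rightarrow> bool) \<Rightarrow> bool" where
  "fullerene V E \<longleftrightarrow> simple_graph V E \<and> connected_graph V E \<and> cubic V E \<and>
     (\<exists>rot. plane_embedding V E rot \<and> (\<forall>f\<in>faces E rot. penta_hexa_face f))"

definition restr :: "'a set \<Rightarrow> ('a \<Rightarrow> 'a \<Rightarrow> bool) \<Rightarrow> 'a \<Rightarrow> 'a \<Rightarrow> bool" where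
  "restr W R x y \<longleftrightarrow> x \<in> W \<and> y \<in> W \<and> R x y"

definition components :: "'a set \<Rightarrow> ('a \<Rightarrow> 'a \<Rightarrow> bool) \<Rightarrow> 'a set set" where
  "components W R = (\<lambda>v. {w \<in> W. (restr W R)\<^sup>*\<^sup>* v w}) ` W"

definition is_K13 :: "'a set \<Rightarrow> ('a \<Rightarrow> 'a \<Rightarrow> bool) \<Rightarrow> bool" where
  "is_K13 K S \<longleftrightarrow> card K = 4 \<and>
     (\<exists>c\<in>K. \<forall>x\<in>K. \<forall>y\<in>K. S x y \<longleftrightarrow> (x = c \<and> y \<noteq> c) \<or> (y = c \<and> x \<noteq> c))"

definition perfect_star_packing :: "'a set \<Rightarrow> ('a \<Rightarrow> 'a \<Rightarrow> bool) \<Rightarrow> ('a \<Rightarrow> 'a \<Rightarrow> bool) \<Rightarrow> bool" where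
  "perfect_star_packing V E S \<longleftrightarrow> (\<forall>u v. S u v \<longrightarrow> E u v) \<and> (\<forall>u v. S u v \<longrightarrow> S v u) \<and>
     (\<forall>K\<in>components V S. is_K13 K S)"

definition centers :: "'a set \<Rightarrow> ('a \<Rightarrow> 'a \<Rightarrow> bool) \<Rightarrow> 'a set" where
  "centers V S = {v \<in> V. card (nbrs S v) = 3}"

definition is_cycle_comp :: "'a set \<Rightarrow> ('a \<Rightarrow> 'a \<Rightarrow> bool) \<Rightarrow> bool" where
  "is_cycle_comp K R \<longleftrightarrow> card K \<ge> 3 \<and> (\<forall>v\<in>K. card (nbrs (restr K R) v) = 2)"

end

theory Submission
  imports Defs
begin


locale fl =
  fixes V :: "'a set" and E S :: "'a \<Rightarrow> 'a \<Rightarrow> bool" and rot :: "'a \<Rightarrow> 'a \<Rightarrow> 'a"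
  assumes sg: "simple_graph V E" and cub: "cubic V E" and conn: "connected_graph V E"
    and rs: "rotation_system V E rot"
    and euler: "int (card V) - int (card (edges E)) + int (card (faces E rot)) = 2"
    and ph: "\<forall>f\<in>faces E rot. penta_hexa_face f"
    and psp: "perfect_star_packing V E S"
begin

lemma finV: "finite V" using sg by (simp add: simple_graph_def)
lemma EV: "E u v \<Longrightarrow> u \<in> V \<and> v \<in> V" using sg by (simp add: simple_graph_def)
lemma Esym: "E u v \<Longrightarrow> E v u" using sg by (simp add: simple_graph_def)
lemma Eirr: "\<not> E v v" using sg by (simp add: simple_graph_def)
lemma SE: "S u v \<Longrightarrow> E u v" using psp by (simp add: perfect_star_packing_def)
lemma Ssym: "S u v \<Longrightarrow> S v u" using psp by (simp add: perfect_star_packing_def)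
lemma nbrs_sub: "nbrs E v \<subseteq> V" using EV by (auto simp: nbrs_def)
lemma fin_nbrs: "finite (nbrs E v)" using nbrs_sub finV finite_subset by blast
lemma card3: "v \<in> V \<Longrightarrow> card (nbrs E v) = 3" using cub by (simp add: cubic_def)
lemma finS: "finite (nbrs S v)"
  by (rule finite_subset[OF _ fin_nbrs[of v]]) (auto simp: nbrs_def SE)

definition C where "C = centers V S"

definition comp where "comp v = {w \<in> V. (restr V S)\<^sup>*\<^sup>* v w}"

lemma comp_in: "v \<in> V \<Longrightarrow> comp v \<in> components V S"
  by (auto simp: comp_def components_def)

lemma comp_self: "v \<in> V \<Longrightarrow> v \<in> comp v" by (simp add: comp_def)

lemma comp_closed: "x \<in> comp v \<Longrightarrow> S x y \<Longrightarrow> y \<in> comp v"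
proof -
  assume a: "x \<in> comp v" "S x y"
  then have "y \<in> V" "x \<in> V" using EV SE by blast+
  then have "restr V S x y" using a by (simp add: restr_def)
  with a \<open>y \<in> V\<close> show ?thesis unfolding comp_def
    by (auto intro: rtranclp.rtrancl_into_rtrancl)
qed

lemma nbrsS_comp: "x \<in> comp v \<Longrightarrow> nbrs S x = {y \<in> comp v. S x y}"
  using comp_closed by (auto simp: nbrs_def)

lemma star_struct:
  assumes v: "v \<in> V"
  obtains c where "c \<in> comp v" "card (comp v) = 4"
    "nbrs S c = comp v - {c}" "\<And>x. x \<in> comp v \<Longrightarrow> x \<noteq> c \<Longrightarrow> nbrs S x = {c}"
proof -
  have "is_K13 (comp v) S" using psp comp_in[OF v] by (simp add: perfect_star_packing_def)
  then obtain c where c: "c \<in> comp v" "card (comp v) = 4"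
    and st: "\<forall>x\<in>comp v. \<forall>y\<in>comp v. S x y \<longleftrightarrow> (x = c \<and> y \<noteq> c) \<or> (y = c \<and> x \<noteq> c)"
    unfolding is_K13_def by blast
  have 1: "nbrs S c = comp v - {c}" using st c(1) nbrsS_comp[OF c(1)] by auto
  have 2: "nbrs S x = {c}" if "x \<in> comp v" "x \<noteq> c" for x
    using st c(1) nbrsS_comp[OF that(1)] that by auto
  show ?thesis using that c 1 2 by blast
qed

lemma C_iff: "v \<in> C \<longleftrightarrow> v \<in> V \<and> card (nbrs S v) = 3"
  by (simp add: C_def centers_def)

lemma center_nbrs:
  assumes "c \<in> C" "E c w" shows "w \<notin> C \<and> S c w"
proof -
  have cV: "c \<in> V" and c3: "card (nbrs S c) = 3" using assms C_iff by auto
  have sub: "nbrs S c \<subseteq> nbrs E c" by (auto simp: nbrs_def SE)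
  have "nbrs S c = nbrs E c"
    using card_subset_eq[OF fin_nbrs sub] c3 card3[OF cV] by simp
  then have Scw: "S c w" using assms(2) by (auto simp: nbrs_def)
  obtain c0 where c0: "c0 \<in> comp c" "card (comp c) = 4"
    "nbrs S c0 = comp c - {c0}" "\<And>x. x \<in> comp c \<Longrightarrow> x \<noteq> c0 \<Longrightarrow> nbrs S x = {c0}"
    using star_struct[OF cV] by blast
  have "c = c0"
  proof (rule ccontr)
    assume "c \<noteq> c0" then have "nbrs S c = {c0}" using c0(4) comp_self[OF cV] by blast
    with c3 show False by simp
  qed
  have wc: "w \<in> comp c" using comp_closed[OF comp_self[OF cV] Scw] .
  have "w \<noteq> c" using Eirr assms(2) by blast
  then have "nbrs S w = {c0}" using c0(4) wc `c = c0` by blast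
  then have "w \<notin> C" using C_iff by auto
  with Scw show ?thesis by blast
qed

lemma leaf_center:
  assumes "v \<in> V" "v \<notin> C" shows "\<exists>!c. c \<in> C \<and> E v c"
proof -
  obtain c0 where c0: "c0 \<in> comp v" "card (comp v) = 4"
    "nbrs S c0 = comp v - {c0}" "\<And>x. x \<in> comp v \<Longrightarrow> x \<noteq> c0 \<Longrightarrow> nbrs S x = {c0}"
    using star_struct[OF assms(1)] by blast
  have c0V: "c0 \<in> V" using c0(1) by (simp add: comp_def)
  have c0C: "c0 \<in> C" using c0(2,3) c0(1) c0V C_iff by simp
  have "v \<noteq> c0" using assms c0C by blast
  then have "nbrs S v = {c0}" using c0(4) comp_self[OF assms(1)] by blast
  then have "S v c0" by (auto simp: nbrs_def)
  then have Ev: "E v c0" by (rule SE)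
  have uq: "c = c0" if "c \<in> C" "E v c" for c
  proof -
    have "S c v" using center_nbrs[OF that(1) Esym[OF that(2)]] by blast
    then have "c \<in> nbrs S v" using Ssym by (auto simp: nbrs_def)
    with `nbrs S v = {c0}` show ?thesis by simp
  qed
  show ?thesis
  proof (rule ex1I[of _ c0])
    show "c0 \<in> C \<and> E v c0" using c0C Ev by blast
  next
    fix c assume "c \<in> C \<and> E v c" then show "c = c0" using uq by blast
  qed
qed

lemma leaf_center_ex:
  assumes "v \<in> V" "v \<notin> C" obtains c where "c \<in> C" "E v c"
proof -
  have "\<exists>c. c \<in> C \<and> E v c" using leaf_center[OF assms] by (rule ex1_implies_ex)
  then show ?thesis using that by blast
qed

lemma leaf_center_uniq:
  assumes "v \<in> V" "v \<notin> C" "c \<in> C" "E v c" "c' \<in> C" "E v c'" shows "c = c'"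
  using leaf_center[OF assms(1,2)] assms(3-6) by (metis (no_types, lifting))

lemma leaf_nbrs2:
  assumes "v \<in> V" "v \<notin> C" shows "card (nbrs E v - C) = 2"
proof -
  obtain c where c: "c \<in> C" "E v c" using leaf_center_ex[OF assms] by blast
  have "nbrs E v \<inter> C = {c}" using c leaf_center_uniq[OF assms] by (auto simp: nbrs_def)
  then have "nbrs E v - C = nbrs E v - {c}" by blast
  then show ?thesis using card3[OF assms(1)] c(2) fin_nbrs by (simp add: nbrs_def)
qed

end


definition X4 :: "bool \<Rightarrow> bool \<Rightarrow> bool \<Rightarrow> bool \<Rightarrow> nat" where
  "X4 a b c d = (if \<not>a \<and> \<not>b \<and> \<not>c \<and> \<not>d then 1 else 0)"
definition A4 :: "bool \<Rightarrow> bool \<Rightarrow> bool \<Rightarrow> bool \<Rightarrow> nat" where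
  "A4 a b c d = (if a \<and> \<not>b \<and> \<not>c \<and> d then 1 else 0)"

lemma comb6b:
  fixes a b c d e f :: bool
  assumes "\<not>(a \<and> b)" "\<not>(b \<and> c)" "\<not>(c \<and> d)" "\<not>(d \<and> e)" "\<not>(e \<and> f)" "\<not>(f \<and> a)"
    "\<not>(a \<and> c)" "\<not>(b \<and> d)" "\<not>(c \<and> e)" "\<not>(d \<and> f)" "\<not>(e \<and> a)" "\<not>(f \<and> b)"
  shows "even (6 + (X4 a b c d + X4 b c d e + X4 c d e f + X4 d e f a + X4 e f a b + X4 f a b c)
     + (A4 a b c d + A4 b c d e + A4 c d e f + A4 d e f a + A4 e f a b + A4 f a b c))
   \<and> even (A4 a b c d + A4 b c d e + A4 c d e f + A4 d e f a + A4 e f a b + A4 f a b c)"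
  using assms unfolding X4_def A4_def
  by (cases a; cases b; cases c; cases d; cases e; cases f; simp)

lemma comb5b:
  fixes a b c d e :: bool
  assumes "\<not>(a \<and> b)" "\<not>(b \<and> c)" "\<not>(c \<and> d)" "\<not>(d \<and> e)" "\<not>(e \<and> a)"
    "\<not>(a \<and> c)" "\<not>(b \<and> d)" "\<not>(c \<and> e)" "\<not>(d \<and> a)" "\<not>(e \<and> b)"
  shows "even (5 + (X4 a b c d + X4 b c d e + X4 c d e a + X4 d e a b + X4 e a b c)
     + (A4 a b c d + A4 b c d e + A4 c d e a + A4 d e a b + A4 e a b c))
   \<and> even (A4 a b c d + A4 b c d e + A4 c d e a + A4 d e a b + A4 e a b c)"
  using assms unfolding X4_def A4_def
  by (cases a; cases b; cases c; cases d; cases e; simp)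

lemma s5: "(\<Sum>i<(5::nat). g i) = g 0 + g 1 + g 2 + g 3 + (g 4::nat)"
  by (simp add: eval_nat_numeral)
lemma s6: "(\<Sum>i<(6::nat). g i) = g 0 + g 1 + g 2 + g 3 + g 4 + (g 5::nat)"
  by (simp add: eval_nat_numeral)

lemma nums: "(0::nat)+1 = 1" "(0::nat)+2 = 2" "(0::nat)+3 = 3"
  "(1::nat)+1 = 2" "(1::nat)+2 = 3" "(1::nat)+3 = 4"
  "(2::nat)+1 = 3" "(2::nat)+2 = 4" "(2::nat)+3 = 5"
  "(3::nat)+1 = 4" "(3::nat)+2 = 5" "(3::nat)+3 = 6"
  "(4::nat)+1 = 5" "(4::nat)+2 = 6" "(4::nat)+3 = 7"
  "(5::nat)+1 = 6" "(5::nat)+2 = 7" "(5::nat)+3 = 8"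
  "(0::nat)+5 = 5" "(1::nat)+5 = 6" "(2::nat)+5 = 7"
  "(0::nat)+6 = 6" "(1::nat)+6 = 7" "(2::nat)+6 = 8"
  by simp_all

lemma comb5:
  fixes z :: "nat \<Rightarrow> bool"
  assumes per: "\<And>i. z (i+5) = z i" and c1: "\<And>i. z i \<Longrightarrow> \<not> z (i+1)"
    and c2: "\<And>i. \<not> (z i \<and> z (i+2))"
  shows "even (5 + (\<Sum>i<5. X4 (z i) (z (i+1)) (z (i+2)) (z (i+3))) + (\<Sum>i<5. A4 (z i) (z (i+1)) (z (i+2)) (z (i+3))))
       \<and> even (\<Sum>i<5. A4 (z i) (z (i+1)) (z (i+2)) (z (i+3)))"
proof -
  have p: "z 5 = z 0" "z 6 = z 1" "z 7 = z 2"
    using per[of 0] per[of 1] per[of 2] by (simp_all only: nums)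
  have a: "\<not>(z 0 \<and> z 1)" "\<not>(z 1 \<and> z 2)" "\<not>(z 2 \<and> z 3)" "\<not>(z 3 \<and> z 4)" "\<not>(z 4 \<and> z 0)"
    using c1[of 0] c1[of 1] c1[of 2] c1[of 3] c1[of 4] p by (simp_all only: nums) blast+
  have b: "\<not>(z 0 \<and> z 2)" "\<not>(z 1 \<and> z 3)" "\<not>(z 2 \<and> z 4)" "\<not>(z 3 \<and> z 0)" "\<not>(z 4 \<and> z 1)"
    using c2[of 0] c2[of 1] c2[of 2] c2[of 3] c2[of 4] p by (simp_all only: nums) blast+
  show ?thesis
    unfolding s5 using comb5b[OF a b] by (simp only: nums p)
qed

lemma comb6:
  fixes z :: "nat \<Rightarrow> bool"
  assumes per: "\<And>i. z (i+6) = z i" and c1: "\<And>i. z i \<Longrightarrow> \<not> z (i+1)"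
    and c2: "\<And>i. \<not> (z i \<and> z (i+2))"
  shows "even (6 + (\<Sum>i<6. X4 (z i) (z (i+1)) (z (i+2)) (z (i+3))) + (\<Sum>i<6. A4 (z i) (z (i+1)) (z (i+2)) (z (i+3))))
       \<and> even (\<Sum>i<6. A4 (z i) (z (i+1)) (z (i+2)) (z (i+3)))"
proof -
  have p: "z 6 = z 0" "z 7 = z 1" "z 8 = z 2"
    using per[of 0] per[of 1] per[of 2] by (simp_all only: nums)
  have a: "\<not>(z 0 \<and> z 1)" "\<not>(z 1 \<and> z 2)" "\<not>(z 2 \<and> z 3)" "\<not>(z 3 \<and> z 4)" "\<not>(z 4 \<and> z 5)" "\<not>(z 5 \<and> z 0)"
    using c1[of 0] c1[of 1] c1[of 2] c1[of 3] c1[of 4] c1[of 5] p by (simp_all only: nums) blast+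
  have b: "\<not>(z 0 \<and> z 2)" "\<not>(z 1 \<and> z 3)" "\<not>(z 2 \<and> z 4)" "\<not>(z 3 \<and> z 5)" "\<not>(z 4 \<and> z 0)" "\<not>(z 5 \<and> z 1)"
    using c2[of 0] c2[of 1] c2[of 2] c2[of 3] c2[of 4] c2[of 5] p by (simp_all only: nums) blast+
  show ?thesis
    unfolding s6 using comb6b[OF a b] by (simp only: nums p)
qed


lemma sum_parity:
  fixes f :: "'b \<Rightarrow> nat"
  assumes "finite A"
  shows "even (sum f A) = even (card {x\<in>A. odd (f x)})"
  using assms
proof (induction A rule: finite_induct)
  case empty then show ?case by simp
next
  case (insert a A)
  have fin: "finite {x\<in>A. odd (f x)}" using insert(1) by simp
  show ?case
  proof (cases "odd (f a)")
    case True
    then have "{x\<in>insert a A. odd (f x)} = insert a {x\<in>A. odd (f x)}" by auto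
    then have "card {x\<in>insert a A. odd (f x)} = Suc (card {x\<in>A. odd (f x)})"
      using fin insert(2) by simp
    then show ?thesis using insert True by simp
  next
    case False
    then have "{x\<in>insert a A. odd (f x)} = {x\<in>A. odd (f x)}" by auto
    then show ?thesis using insert False by simp
  qed
qed

context fl begin

definition L where "L = V - C"
definition cl where "cl v = {w \<in> L. (restr L E)\<^sup>*\<^sup>* v w}"

lemma restr_sym: "restr L E x y \<Longrightarrow> restr L E y x"
  by (auto simp: restr_def Esym)

lemma rt_sym: "(restr L E)\<^sup>*\<^sup>* x y \<Longrightarrow> (restr L E)\<^sup>*\<^sup>* y x"
  by (induction rule: rtranclp_induct) (auto intro: converse_rtranclp_into_rtranclp restr_sym)

lemma comps_eq: "components L E = cl ` L"
  by (simp add: components_def cl_def)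

lemma cl_eq: "w \<in> cl v \<Longrightarrow> cl w = cl v"
  unfolding cl_def using rt_sym by (auto intro: rtranclp_trans)

lemma cl_self: "v \<in> L \<Longrightarrow> v \<in> cl v" by (simp add: cl_def)

lemma cl_sub: "cl v \<subseteq> L" by (auto simp: cl_def)

lemma finL: "finite L" using finV by (simp add: L_def)

lemma cl_nbrs:
  assumes "v \<in> cl u" shows "nbrs (restr (cl u) E) v = nbrs E v - C"
proof -
  have vL: "v \<in> L" using assms cl_sub by blast
  have "w \<in> cl u" if "E v w" "w \<notin> C" for w
  proof -
    have "w \<in> L" using that EV by (auto simp: L_def)
    then have "restr L E v w" using vL that by (simp add: restr_def)
    then show ?thesis using assms \<open>w \<in> L\<close> unfolding cl_def by (auto intro: rtranclp.rtrancl_into_rtrancl)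
  qed
  then show ?thesis using assms cl_sub by (auto simp: nbrs_def restr_def L_def)
qed

lemma cl_cycle:
  assumes "u \<in> L" shows "is_cycle_comp (cl u) E"
proof -
  have c2: "card (nbrs (restr (cl u) E) v) = 2" if "v \<in> cl u" for v
  proof -
    have "v \<in> V" "v \<notin> C" using that cl_sub by (auto simp: L_def)
    then show ?thesis using cl_nbrs[OF that] leaf_nbrs2 by simp
  qed
  have uc: "u \<in> cl u" using cl_self[OF assms] .
  have sub: "insert u (nbrs (restr (cl u) E) u) \<subseteq> cl u" using uc by (auto simp: nbrs_def restr_def)
  have nu: "u \<notin> nbrs (restr (cl u) E) u" using Eirr by (auto simp: nbrs_def restr_def)
  have finc: "finite (cl u)" using finite_subset[OF cl_sub finL] .
  have "finite (nbrs (restr (cl u) E) u)" using finite_subset[OF sub finc] by simp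
  then have "card (insert u (nbrs (restr (cl u) E) u)) = 3" using nu c2[OF uc] by simp
  then have "card (cl u) \<ge> 3" using card_mono[OF finc sub] by simp
  then show ?thesis using c2 by (simp add: is_cycle_comp_def)
qed

lemma reduce:
  assumes "even (card (V - C))"
  shows "even (card {K \<in> components (V - centers V S) E. is_cycle_comp K E \<and> odd (card K)})"
proof -
  have eqs: "{K \<in> components (V - centers V S) E. is_cycle_comp K E \<and> odd (card K)}
     = {K \<in> cl ` L. odd (card K)}"
    using cl_cycle comps_eq by (auto simp: C_def[symmetric] L_def[symmetric])
  have fin: "finite (cl ` L)" using finL by simp
  have un: "\<Union> (cl ` L) = L" using cl_sub cl_self by blast
  have disj: "pairwise disjnt (cl ` L)"
    unfolding pairwise_def disjnt_def
  proof (clarify)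
    fix a b assume "cl a \<noteq> cl b"
    then show "cl a \<inter> cl b = {}" using cl_eq by blast
  qed
  have finK: "\<And>K. K\<in>cl ` L \<Longrightarrow> finite K" using finL cl_sub by (auto intro: finite_subset)
  have "card L = sum card (cl ` L)"
    using card_Union_disjoint[OF disj finK] un by simp
  then have "even (sum card (cl ` L))" using assms by (simp add: L_def)
  then have "even (card {K \<in> cl ` L. odd (card K)})" using sum_parity[OF fin] by simp
  then show ?thesis using eqs by simp
qed

end


lemma closed_iter: "(\<And>y. y \<in> X \<Longrightarrow> r y \<in> X) \<Longrightarrow> u \<in> X \<Longrightarrow> (r ^^ n) u \<in> X"
  by (induction n) auto

context fl begin

lemma rot_maps: "v \<in> V \<Longrightarrow> E v u \<Longrightarrow> E v (rot v u)"
  using rs by (simp add: rotation_system_def)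

lemma rot_reach: "v \<in> V \<Longrightarrow> E v u \<Longrightarrow> E v w \<Longrightarrow> \<exists>n. (rot v ^^ n) u = w"
  using rs by (simp add: rotation_system_def)

lemma rot_closed_bad:
  assumes v: "v \<in> V" and u: "E v u" and X: "\<And>y. y \<in> X \<Longrightarrow> rot v y \<in> X" "u \<in> X"
  shows "nbrs E v \<subseteq> X"
proof
  fix w assume "w \<in> nbrs E v"
  then have "E v w" by (simp add: nbrs_def)
  then obtain n where "(rot v ^^ n) u = w" using rot_reach[OF v u] by blast
  then show "w \<in> X" using closed_iter[of X "rot v", OF X(1) X(2)] by metis
qed

lemma rot_nofix:
  assumes v: "v \<in> V" and u: "E v u" shows "rot v u \<noteq> u"
proof
  assume h: "rot v u = u"
  have "nbrs E v \<subseteq> {u}" by (rule rot_closed_bad[OF v u]) (use h in auto)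
  then have "card (nbrs E v) \<le> card {u}" by (rule card_mono[rotated]) simp
  then have "card (nbrs E v) \<le> 1" by simp
  then show False using card3[OF v] by simp
qed

lemma rot_cycle:
  assumes v: "v \<in> V" and x: "E v x"
  shows "rot v x \<noteq> x" "rot v (rot v x) \<noteq> x" "rot v (rot v x) \<noteq> rot v x"
    "rot v (rot v (rot v x)) = x" "nbrs E v = {x, rot v x, rot v (rot v x)}"
proof -
  define y where "y = rot v x"
  define z where "z = rot v y"
  have Ey: "E v y" using rot_maps[OF v x] y_def by simp
  have Ez: "E v z" using rot_maps[OF v Ey] z_def by simp
  have yx: "y \<noteq> x" using rot_nofix[OF v x] y_def by simp
  have zy: "z \<noteq> y" using rot_nofix[OF v Ey] z_def by simp
  have zx: "z \<noteq> x"
  proof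
    assume h: "z = x"
    have "nbrs E v \<subseteq> {x, y}" by (rule rot_closed_bad[OF v x]) (use h y_def z_def in auto)
    then have "card (nbrs E v) \<le> card {x, y}" by (rule card_mono[rotated]) simp
    also have "card {x, y} \<le> 2" by (cases "x = y") simp_all
    finally have "card (nbrs E v) \<le> 2" .
    then show False using card3[OF v] by simp
  qed
  have sub: "{x, y, z} \<subseteq> nbrs E v" using x Ey Ez by (simp add: nbrs_def)
  have c3: "card {x, y, z} = 3" using yx zy zx by simp
  have N: "nbrs E v = {x, y, z}"
    using card_subset_eq[OF fin_nbrs sub] c3 card3[OF v] by simp
  have Ez': "E v (rot v z)" using rot_maps[OF v Ez] .
  have "rot v z \<noteq> z" using rot_nofix[OF v Ez] .
  moreover have "rot v z \<noteq> y"
  proof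
    assume h: "rot v z = y"
    have "nbrs E v \<subseteq> {y, z}" by (rule rot_closed_bad[OF v Ey]) (use h y_def z_def in auto)
    then have "card (nbrs E v) \<le> card {y, z}" by (rule card_mono[rotated]) simp
    also have "card {y, z} \<le> 2" by (cases "y = z") simp_all
    finally have "card (nbrs E v) \<le> 2" .
    then show False using card3[OF v] by simp
  qed
  moreover have "rot v z \<in> nbrs E v" using Ez' by (simp add: nbrs_def)
  ultimately have "rot v z = x" using N by blast
  then show "rot v x \<noteq> x" "rot v (rot v x) \<noteq> x" "rot v (rot v x) \<noteq> rot v x"
    "rot v (rot v (rot v x)) = x" "nbrs E v = {x, rot v x, rot v (rot v x)}"
    using yx zy zx N y_def z_def by auto
qed

lemma rot_inj:
  assumes v: "v \<in> V" and a: "E v a" and b: "E v b" and eq: "rot v a = rot v b" shows "a = b"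
proof -
  have "b \<in> nbrs E v" using b by (simp add: nbrs_def)
  then have "b = a \<or> b = rot v a \<or> b = rot v (rot v a)" using rot_cycle(5)[OF v a] by blast
  then show ?thesis using rot_cycle(1-4)[OF v a] eq by metis
qed

definition D where "D = darts E"
definition step where "step = face_step rot"
definition fc where "fc = face_of rot"

lemma D_iff: "d \<in> D \<longleftrightarrow> E (fst d) (snd d)"
  by (cases d) (simp add: D_def darts_def)

lemma step_eq: "step d = (snd d, rot (snd d) (fst d))"
  by (simp add: step_def face_step_def)

lemma step_D: "d \<in> D \<Longrightarrow> step d \<in> D"
  unfolding D_iff step_eq using rot_maps EV Esym by simp

lemma iter_D: "d \<in> D \<Longrightarrow> (step ^^ n) d \<in> D"
  by (induction n) (auto simp: step_D)

lemma step_inj: "inj_on step D"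
proof (rule inj_onI)
  fix d d' assume d: "d \<in> D" "d' \<in> D" and eq: "step d = step d'"
  then have s: "snd d = snd d'" and r: "rot (snd d) (fst d) = rot (snd d) (fst d')"
    by (auto simp: step_eq)
  have "fst d = fst d'"
    using rot_inj[of "snd d" "fst d" "fst d'"] d r s EV Esym by (auto simp: D_iff)
  then show "d = d'" using s by (simp add: prod_eq_iff)
qed

lemma finD: "finite D"
proof -
  have "D \<subseteq> V \<times> V" using EV by (auto simp: D_iff)
  then show ?thesis using finite_subset finV by blast
qed

lemma iter_cancel: "a \<in> D \<Longrightarrow> b \<in> D \<Longrightarrow> (step ^^ i) a = (step ^^ i) b \<Longrightarrow> a = b"
proof (induction i)
  case 0 then show ?case by simp
next
  case (Suc i)
  have "(step ^^ i) a = (step ^^ i) b"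
    using step_inj iter_D[OF Suc.prems(1)] iter_D[OF Suc.prems(2)] Suc.prems(3)
    by (auto dest: inj_onD)
  then show ?case using Suc by blast
qed

lemma has_period: assumes d: "d \<in> D" shows "\<exists>p>0. (step ^^ p) d = d"
proof -
  let ?f = "\<lambda>n. (step ^^ n) d"
  have "\<not> inj_on ?f {..card D}"
  proof
    assume "inj_on ?f {..card D}"
    moreover have "?f ` {..card D} \<subseteq> D" using iter_D[OF d] by blast
    ultimately have "card {..card D} \<le> card D" using card_inj_on_le finD by blast
    then show False by simp
  qed
  then obtain i j where ij: "i \<noteq> j" "?f i = ?f j" unfolding inj_on_def by blast
  have "\<exists>i j. i < j \<and> ?f i = ?f j"
  proof (cases "i < j")
    case True then show ?thesis using ij by blast
  next
    case False then have "j < i" using ij by simp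
    then show ?thesis using ij by metis
  qed
  then obtain i j where ij: "i < j" "?f i = ?f j" by blast
  have "?f j = (step ^^ (i + (j - i))) d" using ij(1) by simp
  also have "\<dots> = (step ^^ i) ((step ^^ (j - i)) d)" by (simp only: funpow_add o_apply)
  finally have "?f j = (step ^^ i) ((step ^^ (j - i)) d)" .
  then have "d = (step ^^ (j - i)) d"
    using iter_cancel[OF d iter_D[OF d]] ij(2) by metis
  then show ?thesis using ij(1) by (intro exI[of _ "j - i"]) simp
qed

definition per where "per d = (LEAST p. 0 < p \<and> (step ^^ p) d = d)"

lemma per: assumes "d \<in> D" shows "0 < per d" "(step ^^ per d) d = d"
proof -
  have "0 < per d \<and> (step ^^ per d) d = d"
    unfolding per_def using has_period[OF assms] by (rule LeastI_ex)
  then show "0 < per d" "(step ^^ per d) d = d" by auto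
qed

lemma per_min: "d \<in> D \<Longrightarrow> 0 < q \<Longrightarrow> q < per d \<Longrightarrow> (step ^^ q) d \<noteq> d"
  unfolding per_def using not_less_Least[of q "\<lambda>p. 0 < p \<and> (step ^^ p) d = d"] by simp

lemma iter_mult: "d \<in> D \<Longrightarrow> (step ^^ (k * per d)) d = d"
proof (induction k)
  case 0 then show ?case by simp
next
  case (Suc k)
  have "(step ^^ (Suc k * per d)) d = (step ^^ per d) ((step ^^ (k * per d)) d)"
    by (simp add: funpow_add)
  then show ?case using Suc per(2)[OF Suc.prems] by simp
qed

lemma iter_mod: assumes d: "d \<in> D" shows "(step ^^ n) d = (step ^^ (n mod per d)) d"
proof -
  have "(step ^^ n) d = (step ^^ (n mod per d + (n div per d) * per d)) d"
    by (simp only: mod_div_mult_eq)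
  also have "\<dots> = (step ^^ (n mod per d)) ((step ^^ ((n div per d) * per d)) d)"
    by (simp only: funpow_add o_apply)
  finally show ?thesis using iter_mult[OF d] by simp
qed

lemma iter_inj: assumes d: "d \<in> D" and i: "i < per d" and j: "j < per d"
  and eq: "(step ^^ i) d = (step ^^ j) d" shows "i = j"
proof (rule ccontr)
  assume ne: "i \<noteq> j"
  have key: "False" if "a < b" "b < per d" "(step ^^ a) d = (step ^^ b) d" for a b
  proof -
    have "(step ^^ b) d = (step ^^ (a + (b - a))) d" using that(1) by simp
    also have "\<dots> = (step ^^ a) ((step ^^ (b - a)) d)" by (simp only: funpow_add o_apply)
    finally have "(step ^^ b) d = (step ^^ a) ((step ^^ (b - a)) d)" .
    then have "d = (step ^^ (b - a)) d"
      using iter_cancel[OF d iter_D[OF d]] that(3) by metis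
    moreover have "0 < b - a" "b - a < per d" using that by simp_all
    ultimately show False using per_min[OF d, of "b - a"] by simp
  qed
  show False
  proof (cases "i < j")
    case True then show False using key[OF True j eq] by simp
  next
    case False then have "j < i" using ne by simp
    then show False using key[OF _ i eq[symmetric]] by simp
  qed
qed

lemma fc_eq: assumes d: "d \<in> D" shows "fc d = (\<lambda>i. (step ^^ i) d) ` {..<per d}"
proof
  show "fc d \<subseteq> (\<lambda>i. (step ^^ i) d) ` {..<per d}"
  proof
    fix x assume "x \<in> fc d"
    then obtain n where "x = (step ^^ n) d" by (auto simp: fc_def face_of_def step_def)
    then have "x = (step ^^ (n mod per d)) d" using iter_mod[OF d] by simp
    moreover have "n mod per d < per d" using per(1)[OF d] by simp
    ultimately show "x \<in> (\<lambda>i. (step ^^ i) d) ` {..<per d}" by blast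
  qed
  show "(\<lambda>i. (step ^^ i) d) ` {..<per d} \<subseteq> fc d"
    by (auto simp: fc_def face_of_def step_def)
qed

lemma inj_iter: assumes d: "d \<in> D" shows "inj_on (\<lambda>i. (step ^^ i) d) {..<per d}"
proof (rule inj_onI)
  fix i j assume "i \<in> {..<per d}" "j \<in> {..<per d}" "(step ^^ i) d = (step ^^ j) d"
  then show "i = j" using iter_inj[OF d] by simp
qed

lemma card_fc: "d \<in> D \<Longrightarrow> card (fc d) = per d"
  using fc_eq card_image[OF inj_iter] by simp

lemma fc_sub: assumes d: "d \<in> D" shows "fc d \<subseteq> D"
proof
  fix x assume "x \<in> fc d"
  then obtain i where "x = (step ^^ i) d" using fc_eq[OF d] by blast
  then show "x \<in> D" using iter_D[OF d] by simp
qed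

lemma fc_self: "d \<in> fc d"
  unfolding fc_def face_of_def by (auto intro: exI[of _ 0])

lemma fc_iter: assumes d: "d \<in> D" shows "fc ((step ^^ m) d) = fc d"
proof
  show "fc ((step ^^ m) d) \<subseteq> fc d"
  proof
    fix x assume "x \<in> fc ((step ^^ m) d)"
    then obtain n where x: "x = (step ^^ n) ((step ^^ m) d)" by (auto simp: fc_def face_of_def step_def)
    then have "x = (step ^^ (n + m)) d" by (simp only: funpow_add o_apply)
    then show "x \<in> fc d" by (auto simp: fc_def face_of_def step_def)
  qed
  show "fc d \<subseteq> fc ((step ^^ m) d)"
  proof
    fix x assume "x \<in> fc d"
    then obtain n where x: "x = (step ^^ n) d" by (auto simp: fc_def face_of_def step_def)
    have p: "0 < per d" using per(1)[OF d] .
    have "(n + per d * m) mod per d = n mod per d" by simp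
    then have x2: "x = (step ^^ (n + per d * m)) d" using iter_mod[OF d, of n] iter_mod[OF d, of "n + per d * m"] x by simp
    have "m \<le> per d * m" using p by simp
    then have "n + per d * m = (n + per d * m - m) + m" by arith
    then have "x = (step ^^ ((n + per d * m - m) + m)) d" using x2 by simp
    then have "x = (step ^^ (n + per d * m - m)) ((step ^^ m) d)"
      by (simp only: funpow_add o_apply)
    then show "x \<in> fc ((step ^^ m) d)" by (auto simp: fc_def face_of_def step_def)
  qed
qed

lemma fc_mem: assumes "d \<in> D" "d' \<in> fc d" shows "fc d' = fc d"
proof -
  obtain n where "d' = (step ^^ n) d" using assms(2) by (auto simp: fc_def face_of_def step_def)
  then show ?thesis using fc_iter[OF assms(1)] by simp
qed

lemma fc_step: "d \<in> D \<Longrightarrow> fc (step d) = fc d"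
  using fc_iter[of d 1] by simp

lemma faces_eq: "faces E rot = fc ` D"
  by (simp add: faces_def fc_def D_def)

end


lemma card_filter_image:
  assumes "inj_on g A" shows "card {x \<in> g ` A. P x} = card {i \<in> A. P (g i)}"
proof -
  have "{x \<in> g ` A. P x} = g ` {i \<in> A. P (g i)}" by blast
  moreover have "inj_on g {i \<in> A. P (g i)}" using assms by (rule inj_on_subset) blast
  ultimately show ?thesis by (simp add: card_image)
qed

lemma card_filter_sum:
  assumes "finite A" shows "card {i \<in> A. Q i} = (\<Sum>i\<in>A. if Q i then 1 else (0::nat))"
  using sum.inter_filter[OF assms, of "\<lambda>_. 1::nat" Q] by simp

lemma sum_shift:
  fixes h :: "nat \<Rightarrow> nat"
  assumes "h l = h 0" shows "(\<Sum>i<l. h i) = (\<Sum>i<l. h (Suc i))"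
proof -
  have "(\<Sum>i<Suc l. h i) = h 0 + (\<Sum>i<l. h (Suc i))" by (rule sum.lessThan_Suc_shift)
  moreover have "(\<Sum>i<Suc l. h i) = (\<Sum>i<l. h i) + h l" by simp
  ultimately show ?thesis using assms by simp
qed

context fl begin

definition Fd where "Fd d \<longleftrightarrow> fst d \<notin> C \<and> snd d \<notin> C"
definition rv :: "'a \<times> 'a \<Rightarrow> 'a \<times> 'a" where "rv d = (snd d, fst d)"
definition XX where "XX d \<longleftrightarrow> Fd d \<and> Fd (step d) \<and> \<not> Fd (step (rv d))"
definition AA where "AA d \<longleftrightarrow> Fd d \<and> \<not> Fd (step d) \<and> Fd (step (rv d))"

lemma leaf_third:
  assumes w: "w \<in> V" "w \<notin> C" and x: "E w x"
  shows "rot w (rot w x) \<notin> C \<longleftrightarrow> (x \<in> C \<or> rot w x \<in> C)"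
proof -
  let ?y = "rot w x" let ?t = "rot w (rot w x)"
  have N: "nbrs E w = {x, ?y, ?t}" and d1: "?y \<noteq> x" and d2: "?t \<noteq> x" and d3: "?t \<noteq> ?y"
    using rot_cycle[OF w(1) x] by auto
  obtain c where c: "c \<in> C" "E w c" using leaf_center_ex[OF w] by blast
  have "c \<in> {x, ?y, ?t}" using c(2) N by (auto simp: nbrs_def)
  have Ey: "E w ?y" using rot_maps[OF w(1) x] .
  have Et: "E w ?t" using rot_maps[OF w(1) Ey] .
  show ?thesis
  proof
    assume "?t \<notin> C"
    then show "x \<in> C \<or> ?y \<in> C" using \<open>c \<in> {x, ?y, ?t}\<close> c(1) by blast
  next
    assume h: "x \<in> C \<or> ?y \<in> C"
    show "?t \<notin> C"
    proof
      assume tC: "?t \<in> C"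
      from h show False
      proof
        assume "x \<in> C" then show False using leaf_center_uniq[OF w tC Et _ x] d2 by blast
      next
        assume "?y \<in> C" then show False using leaf_center_uniq[OF w tC Et _ Ey] d3 by blast
      qed
    qed
  qed
qed

lemma face_counts:
  assumes d0: "d0 \<in> D"
  shows "even (card (fc d0) + card {d \<in> fc d0. XX d} + card {d \<in> fc d0. AA d})
       \<and> even (card {d \<in> fc d0. AA d})"
proof -
  define l where "l = per d0"
  define dd where "dd i = (step ^^ i) d0" for i
  define vv where "vv i = fst (dd i)" for i
  define z where "z i = (vv i \<in> C)" for i
  have fcf: "fc d0 \<in> faces E rot" using d0 faces_eq by simp
  then have phf: "penta_hexa_face (fc d0)" using ph by blast
  have cl: "card (fc d0) = l" using card_fc[OF d0] l_def by simp
  have l56: "l = 5 \<or> l = 6" using phf cl by (auto simp: penta_hexa_face_def)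
  have fcimg: "fc d0 = dd ` {..<l}" using fc_eq[OF d0] by (simp add: dd_def l_def)
  have ddl: "dd = (\<lambda>i. (step ^^ i) d0)" by (simp add: dd_def fun_eq_iff)
  have injdd: "inj_on dd {..<l}" using inj_iter[OF d0] by (simp add: ddl l_def)
  have ddD: "dd i \<in> D" for i using iter_D[OF d0] by (simp add: dd_def)
  have ddS: "dd (Suc i) = step (dd i)" for i by (simp add: dd_def)
  have sndd: "snd (dd i) = vv (Suc i)" for i by (simp add: vv_def ddS step_eq)
  have Evv: "E (vv i) (vv (Suc i))" for i using ddD[of i] sndd[of i] by (simp add: D_iff vv_def)
  have vvV: "vv i \<in> V" for i using Evv[of i] EV by blast
  have rotvv: "rot (vv (Suc i)) (vv i) = vv (Suc (Suc i))" for i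
  proof -
    have "dd (Suc i) = (vv (Suc i), rot (vv (Suc i)) (vv i))"
      using ddS[of i] sndd[of i] by (simp add: step_eq vv_def)
    then show ?thesis using sndd[of "Suc i"] by simp
  qed
  have ddmod: "dd i = dd (i mod l)" for i using iter_mod[OF d0] by (simp add: dd_def l_def)
  have ddper: "dd (i + l) = dd i" for i using ddmod[of "i + l"] ddmod[of i] by simp
  have fstimg: "fst ` fc d0 = vv ` {..<l}" using fcimg by (auto simp: vv_def)
  have "card (vv ` {..<l}) = card {..<l}"
    using phf cl fstimg by (simp add: penta_hexa_face_def)
  then have injvv: "inj_on vv {..<l}" by (simp add: inj_on_iff_eq_card)
  have vvmod: "vv i = vv (i mod l)" for i using ddmod by (simp add: vv_def)
  have l3: "l \<ge> 3" using l56 by auto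
  have vv2: "vv i \<noteq> vv (i + 2)" for i
  proof
    assume h: "vv i = vv (i + 2)"
    have lt: "i mod l < l" "(i + 2) mod l < l" using l3 by simp_all
    have "i mod l = (i + 2) mod l"
      using injvv h vvmod[of i] vvmod[of "i+2"] lt by (auto dest: inj_onD)
    then have "l dvd (i + 2) - i" using mod_eq_dvd_iff_nat[of i "i+2" l] by simp
    then have "l dvd 2" by simp
    then have "l \<le> 2" using dvd_imp_le by fastforce
    then show False using l3 by simp
  qed
  have zper: "z (i + l) = z i" for i using ddper by (simp add: z_def vv_def)
  have c1: "z i \<Longrightarrow> \<not> z (i + 1)" for i
    using center_nbrs[of "vv i" "vv (Suc i)"] Evv[of i] by (simp add: z_def)
  have c2: "\<not> (z i \<and> z (i + 2))" for i
  proof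
    assume h: "z i \<and> z (i + 2)"
    have w: "vv (Suc i) \<in> V" "vv (Suc i) \<notin> C" using c1[of i] h vvV by (auto simp: z_def)
    have "vv i = vv (i + 2)"
      using leaf_center_uniq[OF w, of "vv i" "vv (i+2)"] h Esym[OF Evv[of i]] Evv[of "Suc i"]
      by (simp add: z_def)
    then show False using vv2 by blast
  qed
  have Fdd: "Fd (dd j) \<longleftrightarrow> \<not> z j \<and> \<not> z (Suc j)" for j
    using sndd[of j] by (simp add: Fd_def z_def vv_def)
  have Frv: "Fd (step (rv (dd (Suc i)))) \<longleftrightarrow> \<not> z (Suc i) \<and> (z i \<or> z (Suc (Suc i)))" for i
  proof -
    have e: "step (rv (dd (Suc i))) = (vv (Suc i), rot (vv (Suc i)) (rot (vv (Suc i)) (vv i)))"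
      using sndd[of "Suc i"] rotvv[of i] by (simp add: rv_def step_eq vv_def)
    show ?thesis
    proof (cases "vv (Suc i) \<in> C")
      case True then show ?thesis using e by (simp add: Fd_def z_def)
    next
      case False
      have "rot (vv (Suc i)) (rot (vv (Suc i)) (vv i)) \<notin> C \<longleftrightarrow> (vv i \<in> C \<or> vv (Suc (Suc i)) \<in> C)"
        using leaf_third[OF vvV False Esym[OF Evv[of i]]] rotvv[of i] by simp
      then show ?thesis using e False by (simp add: Fd_def z_def)
    qed
  qed
  have XXi: "(if XX (dd (Suc i)) then 1 else 0) = X4 (z i) (z (i+1)) (z (i+2)) (z (i+3))" for i
    using Fdd[of "Suc i"] Fdd[of "Suc (Suc i)"] Frv[of i] ddS[of "Suc i"]
    by (simp add: XX_def X4_def numeral_eq_Suc) blast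
  have AAi: "(if AA (dd (Suc i)) then 1 else 0) = A4 (z i) (z (i+1)) (z (i+2)) (z (i+3))" for i
    using Fdd[of "Suc i"] Fdd[of "Suc (Suc i)"] Frv[of i] ddS[of "Suc i"]
    by (simp add: AA_def A4_def numeral_eq_Suc) blast
  have cnt: "card {d \<in> fc d0. P d} = (\<Sum>i<l. if P (dd (Suc i)) then 1 else 0)" for P
  proof -
    have "card {d \<in> fc d0. P d} = card {i \<in> {..<l}. P (dd i)}"
      using card_filter_image[OF injdd] fcimg by simp
    also have "\<dots> = (\<Sum>i<l. if P (dd i) then 1 else 0)" by (rule card_filter_sum) simp
    also have "\<dots> = (\<Sum>i<l. if P (dd (Suc i)) then 1 else 0)"
      by (rule sum_shift) (use ddper[of 0] in simp)
    finally show ?thesis .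
  qed
  have cX: "card {d \<in> fc d0. XX d} = (\<Sum>i<l. X4 (z i) (z (i+1)) (z (i+2)) (z (i+3)))"
    using cnt[of XX] XXi by simp
  have cA: "card {d \<in> fc d0. AA d} = (\<Sum>i<l. A4 (z i) (z (i+1)) (z (i+2)) (z (i+3)))"
    using cnt[of AA] AAi by simp
  from l56 show ?thesis
  proof
    assume l5: "l = 5"
    show ?thesis using comb5[of z] zper c1 c2 cX cA cl l5 by simp
  next
    assume l6: "l = 6"
    show ?thesis using comb6[of z] zper c1 c2 cX cA cl l6 by simp
  qed
qed

end


definition symd :: "'b set \<Rightarrow> 'b set \<Rightarrow> 'b set" where "symd A B = (A - B) \<union> (B - A)"

lemma card_symd:
  assumes "finite A" "finite B"
  shows "card (symd A B) + 2 * card (A \<inter> B) = card A + card B"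
proof -
  have d: "(A - B) \<inter> (B - A) = {}" by blast
  have "card (symd A B) = card (A - B) + card (B - A)"
    unfolding symd_def using assms d by (simp add: card_Un_disjoint)
  moreover have "card (A - B) = card A - card (A \<inter> B)" using assms by (simp add: card_Diff_subset_Int Diff_Int2 card_Diff_subset)
  moreover have "card (B - A) = card B - card (A \<inter> B)" using assms by (metis Int_commute card_Diff_subset_Int Diff_Int2 card_Diff_subset finite_Int inf_le2)
  moreover have "card (A \<inter> B) \<le> card A" "card (A \<inter> B) \<le> card B" using assms by (simp_all add: card_mono)
  ultimately show ?thesis by simp
qed

lemma even_invol:
  assumes "finite A" "\<And>x. x \<in> A \<Longrightarrow> g x \<in> A" "\<And>x. x \<in> A \<Longrightarrow> g (g x) = x" "\<And>x. x \<in> A \<Longrightarrow> g x \<noteq> x"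
  shows "even (card A)"
  using assms
proof (induction "card A" arbitrary: A rule: less_induct)
  case less
  show ?case
  proof (cases "A = {}")
    case True then show ?thesis by simp
  next
    case False
    then obtain x where x: "x \<in> A" by blast
    let ?A = "A - {x, g x}"
    have gx: "g x \<in> A" "g x \<noteq> x" using less.prems x by auto
    have c: "card ?A = card A - 2" using less.prems(1) x gx by (simp add: card_Diff_subset)
    have c2: "card A \<ge> 2"
    proof -
      have "{x, g x} \<subseteq> A" using x gx by blast
      then have "card {x, g x} \<le> card A" using less.prems(1) by (simp add: card_mono)
      then show ?thesis using gx by simp
    qed
    have "even (card ?A)"
    proof (rule less.hyps)
      show "card ?A < card A" using c c2 by simp
      show "finite ?A" using less.prems(1) by simp
      fix y assume y: "y \<in> ?A"
      then show "g (g y) = y" "g y \<noteq> y" using less.prems by auto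
      have "g y \<noteq> x" using y less.prems(3)[of y] by auto
      moreover have "g y \<noteq> g x"
      proof
        assume "g y = g x" then have "g (g y) = g (g x)" by simp
        then show False using y less.prems(3)[of y] less.prems(3)[OF x] by auto
      qed
      ultimately show "g y \<in> ?A" using y less.prems(2) by auto
    qed
    then show ?thesis using c c2 by (simp add: even_diff_nat)
  qed
qed

context fl begin

definition Ed where "Ed = edges E"
definition bd where "bd A = {v \<in> V. odd (card {e \<in> A. v \<in> e})}"
definition Zs where "Zs = {A. A \<subseteq> Ed \<and> bd A = {}}"
definition Phi where "Phi T = {e \<in> Ed. \<exists>u v. e = {u, v} \<and> E u v \<and> ((fc (u, v) \<in> T) \<noteq> (fc (v, u) \<in> T))}"
definition Xs where "Xs = {e \<in> Ed. \<exists>u v. e = {u, v} \<and> E u v \<and> u \<notin> C \<and> v \<notin> C}"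

lemma Ed_cases: "e \<in> Ed \<Longrightarrow> \<exists>u v. e = {u, v} \<and> E u v"
  by (auto simp: Ed_def edges_def)

lemma Ed_mem: "E u v \<Longrightarrow> {u, v} \<in> Ed"
  by (auto simp: Ed_def edges_def)

lemma finEd: "finite Ed"
proof -
  have "Ed \<subseteq> Pow V" using EV by (auto simp: Ed_def edges_def)
  then show ?thesis using finV by (meson finite_Pow_iff finite_subset)
qed

lemma Phi_mem: "E u v \<Longrightarrow> {u, v} \<in> Phi T \<longleftrightarrow> ((fc (u, v) \<in> T) \<noteq> (fc (v, u) \<in> T))"
  unfolding Phi_def using Ed_mem by (auto simp: doubleton_eq_iff)

lemma Xs_mem: "E u v \<Longrightarrow> {u, v} \<in> Xs \<longleftrightarrow> (u \<notin> C \<and> v \<notin> C)"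
  unfolding Xs_def using Ed_mem by (auto simp: doubleton_eq_iff)

lemma bd_symd:
  assumes "A \<subseteq> Ed" "B \<subseteq> Ed" shows "bd (symd A B) = symd (bd A) (bd B)"
proof -
  have fA: "finite A" "finite B" using assms finEd finite_subset by auto
  have "odd (card {e \<in> symd A B. v \<in> e}) \<longleftrightarrow> (odd (card {e \<in> A. v \<in> e}) \<noteq> odd (card {e \<in> B. v \<in> e}))" for v
  proof -
    have e1: "{e \<in> symd A B. v \<in> e} = symd {e \<in> A. v \<in> e} {e \<in> B. v \<in> e}" by (auto simp: symd_def)
    have "card (symd {e \<in> A. v \<in> e} {e \<in> B. v \<in> e}) + 2 * card ({e \<in> A. v \<in> e} \<inter> {e \<in> B. v \<in> e})
        = card {e \<in> A. v \<in> e} + card {e \<in> B. v \<in> e}" by (rule card_symd) (use fA in simp_all)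
    then show ?thesis unfolding e1 by presburger
  qed
  then show ?thesis by (auto simp: bd_def symd_def)
qed

lemma bd_empty: "bd {} = {}" by (simp add: bd_def)

lemma bd_single: assumes "E y z" shows "bd {{y, z}} = {y, z}"
proof -
  have yz: "y \<in> V" "z \<in> V" using EV assms by auto
  have "{e \<in> {{y, z}}. v \<in> e} = (if v \<in> {y, z} then {{y, z}} else {})" for v by auto
  then show ?thesis using yz by (auto simp: bd_def)
qed

lemma path_bd:
  assumes v0: "v0 \<in> V" and r: "E\<^sup>*\<^sup>* v0 y" shows "\<exists>P \<subseteq> Ed. bd P = symd {v0} {y}"
  using r
proof (induction rule: rtranclp_induct)
  case base then show ?case by (intro exI[of _ "{}"]) (simp add: bd_empty symd_def)
next
  case (step y z)
  then obtain P where P: "P \<subseteq> Ed" "bd P = symd {v0} {y}" by blast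
  have yz: "y \<noteq> z" using step(2) Eirr by blast
  have s: "{{y, z}} \<subseteq> Ed" using Ed_mem[OF step(2)] by simp
  have "bd (symd P {{y, z}}) = symd (symd {v0} {y}) {y, z}"
    using bd_symd[OF P(1) s] P(2) bd_single[OF step(2)] by simp
  also have "\<dots> = symd {v0} {z}" using yz by (auto simp: symd_def)
  finally have "bd (symd P {{y, z}}) = symd {v0} {z}" .
  moreover have "symd P {{y, z}} \<subseteq> Ed" using P(1) s by (auto simp: symd_def)
  ultimately show ?case by blast
qed

definition ev where "ev v0 Y = symd Y (if odd (card Y) then {v0} else {})"

lemma Y_bd:
  assumes v0: "v0 \<in> V" and Y: "finite Y" "Y \<subseteq> V" shows "\<exists>A \<subseteq> Ed. bd A = ev v0 Y"
  using Y
proof (induction Y rule: finite_induct)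
  case empty then show ?case by (intro exI[of _ "{}"]) (simp add: bd_empty symd_def ev_def)
next
  case (insert y Y)
  then obtain A where A: "A \<subseteq> Ed" "bd A = ev v0 Y" by blast
  have "E\<^sup>*\<^sup>* v0 y" using conn v0 insert(4) by (simp add: connected_graph_def)
  then obtain P where P: "P \<subseteq> Ed" "bd P = symd {v0} {y}" using path_bd[OF v0] by blast
  have "bd (symd A P) = symd (ev v0 Y) (symd {v0} {y})" using bd_symd[OF A(1) P(1)] A(2) P(2) by simp
  also have "\<dots> = ev v0 (insert y Y)"
    using insert(1,2) by (auto simp: ev_def symd_def)
  finally show ?case using A(1) P(1) by (intro exI[of _ "symd A P"]) (auto simp: symd_def)
qed

lemma Zs_upper: "card Zs * 2 ^ (card V - 1) \<le> 2 ^ card Ed"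
proof -
  obtain v0 where v0: "v0 \<in> V" using conn by (auto simp: connected_graph_def)
  define V0 where "V0 = V - {v0}"
  define pi where "pi Y = (SOME A. A \<subseteq> Ed \<and> bd A = ev v0 Y)" for Y
  have pi: "pi Y \<subseteq> Ed \<and> bd (pi Y) = ev v0 Y" if "Y \<subseteq> V0" for Y
  proof -
    have "finite Y" using that finV finite_subset by (auto simp: V0_def)
    then have "\<exists>A. A \<subseteq> Ed \<and> bd A = ev v0 Y" using Y_bd[OF v0] that by (auto simp: V0_def)
    then show ?thesis unfolding pi_def by (rule someI_ex)
  qed
  define g where "g p = symd (fst p) (pi (snd p))" for p
  have ginj: "inj_on g (Zs \<times> Pow V0)"
  proof (rule inj_onI)
    fix p q assume p: "p \<in> Zs \<times> Pow V0" and q: "q \<in> Zs \<times> Pow V0" and eq: "g p = g q"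
    have bdg: "bd (g r) = ev v0 (snd r)" if "r \<in> Zs \<times> Pow V0" for r
    proof -
      have "fst r \<subseteq> Ed" "bd (fst r) = {}" using that by (auto simp: Zs_def)
      moreover have "pi (snd r) \<subseteq> Ed" "bd (pi (snd r)) = ev v0 (snd r)" using pi[of "snd r"] that by auto
      ultimately show ?thesis unfolding g_def using bd_symd[of "fst r" "pi (snd r)"] by (simp add: symd_def)
    qed
    have "ev v0 (snd p) = ev v0 (snd q)" using bdg[OF p] bdg[OF q] eq by simp
    moreover have "ev v0 Y - {v0} = Y" if "Y \<subseteq> V0" for Y using that by (auto simp: ev_def symd_def V0_def)
    moreover have "snd p \<subseteq> V0" "snd q \<subseteq> V0" using p q by (auto simp: mem_Times_iff)
    ultimately have s: "snd p = snd q" by metis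
    have canc: "symd (symd A P) P = A" for A P :: "'a set set" by (auto simp: symd_def)
    have "fst p = symd (g p) (pi (snd p))" using canc by (simp add: g_def)
    also have "\<dots> = symd (g q) (pi (snd q))" using eq s by simp
    also have "\<dots> = fst q" using canc by (simp add: g_def)
    finally have "fst p = fst q" .
    then show "p = q" using s by (simp add: prod_eq_iff)
  qed
  have gimg: "g ` (Zs \<times> Pow V0) \<subseteq> Pow Ed"
  proof
    fix x assume "x \<in> g ` (Zs \<times> Pow V0)"
    then obtain p where "p \<in> Zs \<times> Pow V0" "x = g p" by blast
    then show "x \<in> Pow Ed" using pi[of "snd p"] by (auto simp: g_def symd_def Zs_def)
  qed
  have "card (Zs \<times> Pow V0) \<le> card (Pow Ed)"
    using card_inj_on_le[OF ginj gimg] finEd by simp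
  moreover have "card V0 = card V - 1" using v0 finV by (simp add: V0_def)
  moreover have "finite V0" using finV by (simp add: V0_def)
  ultimately show ?thesis using finEd by (simp add: card_cartesian_product card_Pow)
qed

end


context fl begin

lemma fc_rev_step: "E x v \<Longrightarrow> fc (x, v) = fc (v, rot v x)"
proof -
  assume "E x v"
  then have "(x, v) \<in> D" by (simp add: D_iff)
  then have "fc (step (x, v)) = fc (x, v)" by (rule fc_step)
  then show ?thesis by (simp add: step_eq)
qed

lemma Phi_Z: "Phi T \<in> Zs"
proof -
  have sub: "Phi T \<subseteq> Ed" by (auto simp: Phi_def)
  have "even (card {e \<in> Phi T. v \<in> e})" if v: "v \<in> V" for v
  proof -
    have "nbrs E v \<noteq> {}" using card3[OF v] by auto
    then obtain x where x: "E v x" by (auto simp: nbrs_def)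
    define y where "y = rot v x"
    define t where "t = rot v y"
    have rc: "y \<noteq> x" "t \<noteq> x" "t \<noteq> y" "rot v t = x" "nbrs E v = {x, y, t}"
      using rot_cycle[OF v x] by (simp_all add: y_def t_def)
    have Ey: "E v y" and Et: "E v t" using rc(5) by (auto simp: nbrs_def)
    have inc: "{e \<in> Ed. v \<in> e} = {{v, x}, {v, y}, {v, t}}"
    proof
      show "{e \<in> Ed. v \<in> e} \<subseteq> {{v, x}, {v, y}, {v, t}}"
      proof
        fix e assume "e \<in> {e \<in> Ed. v \<in> e}"
        then obtain a b where e: "e = {a, b}" "E a b" "v \<in> e" using Ed_cases by blast
        then have "(a = v \<and> E v b) \<or> (b = v \<and> E v a)" using Esym by auto
        then have "\<exists>w. e = {v, w} \<and> w \<in> nbrs E v" using e by (auto simp: nbrs_def insert_commute)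
        then show "e \<in> {{v, x}, {v, y}, {v, t}}" using rc(5) by auto
      qed
      show "{{v, x}, {v, y}, {v, t}} \<subseteq> {e \<in> Ed. v \<in> e}" using Ed_mem x Ey Et by auto
    qed
    have fx: "fc (x, v) = fc (v, y)" using fc_rev_step[OF Esym[OF x]] y_def by simp
    have fy: "fc (y, v) = fc (v, t)" using fc_rev_step[OF Esym[OF Ey]] t_def by simp
    have ft: "fc (t, v) = fc (v, x)" using fc_rev_step[OF Esym[OF Et]] rc(4) by simp
    let ?a = "fc (v, x) \<in> T" let ?b = "fc (v, y) \<in> T" let ?c = "fc (v, t) \<in> T"
    have m1: "{v, x} \<in> Phi T \<longleftrightarrow> ?a \<noteq> ?b" using Phi_mem[OF x] fx by simp
    have m2: "{v, y} \<in> Phi T \<longleftrightarrow> ?b \<noteq> ?c" using Phi_mem[OF Ey] fy by simp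
    have m3: "{v, t} \<in> Phi T \<longleftrightarrow> ?c \<noteq> ?a" using Phi_mem[OF Et] ft by simp
    have "{e \<in> Phi T. v \<in> e} = {e \<in> {{v, x}, {v, y}, {v, t}}. e \<in> Phi T}"
      using inc sub by blast
    also have "\<dots> = (if ?a \<noteq> ?b then {{v, x}} else {}) \<union> (if ?b \<noteq> ?c then {{v, y}} else {})
        \<union> (if ?c \<noteq> ?a then {{v, t}} else {})"
      using m1 m2 m3 by auto
    finally have eq: "{e \<in> Phi T. v \<in> e} = \<dots>" .
    have d: "{v, x} \<noteq> {v, y}" "{v, x} \<noteq> {v, t}" "{v, y} \<noteq> {v, t}"
      using rc(1-3) by (auto simp: doubleton_eq_iff)
    show ?thesis unfolding eq using d by (cases ?a; cases ?b; cases ?c) auto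
  qed
  then have "bd (Phi T) = {}" by (auto simp: bd_def)
  then show ?thesis using sub by (simp add: Zs_def)
qed

lemma Xs_Z: "Xs \<in> Zs"
proof -
  have sub: "Xs \<subseteq> Ed" by (auto simp: Xs_def)
  have "even (card {e \<in> Xs. v \<in> e})" if v: "v \<in> V" for v
  proof (cases "v \<in> C")
    case True
    have "{e \<in> Xs. v \<in> e} = {}" using True by (auto simp: Xs_def)
    then have "card {e \<in> Xs. v \<in> e} = 0" by (simp only: card.empty)
    then show ?thesis by simp
  next
    case False
    have "{e \<in> Xs. v \<in> e} = (\<lambda>w. {v, w}) ` (nbrs E v - C)"
    proof
      show "{e \<in> Xs. v \<in> e} \<subseteq> (\<lambda>w. {v, w}) ` (nbrs E v - C)"
      proof
        fix e assume "e \<in> {e \<in> Xs. v \<in> e}"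
        then obtain a b where e: "e = {a, b}" "E a b" "a \<notin> C" "b \<notin> C" "v \<in> e" by (auto simp: Xs_def)
        then have "(a = v \<and> E v b \<and> b \<notin> C) \<or> (b = v \<and> E v a \<and> a \<notin> C)" using Esym by auto
        then show "e \<in> (\<lambda>w. {v, w}) ` (nbrs E v - C)" using e by (auto simp: nbrs_def insert_commute)
      qed
      show "(\<lambda>w. {v, w}) ` (nbrs E v - C) \<subseteq> {e \<in> Xs. v \<in> e}"
        using Xs_mem False by (auto simp: nbrs_def)
    qed
    moreover have "inj_on (\<lambda>w. {v, w}) (nbrs E v - C)"
      by (rule inj_onI) (auto simp: doubleton_eq_iff)
    ultimately have "card {e \<in> Xs. v \<in> e} = card (nbrs E v - C)" by (simp add: card_image)
    then show ?thesis using leaf_nbrs2[OF v False] by simp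
  qed
  then have "bd Xs = {}" by (auto simp: bd_def)
  then show ?thesis using sub by (simp add: Zs_def)
qed

lemma Phi_inj_aux:
  assumes TT: "T \<subseteq> faces E rot - {f0}" "T' \<subseteq> faces E rot - {f0}" and f0: "f0 \<in> faces E rot"
    and eq: "Phi T = Phi T'"
  shows "T = T'"
proof (rule ccontr)
  assume ne: "T \<noteq> T'"
  define U where "U = symd T T'"
  have Usym: "fc (u, v) \<in> U \<longleftrightarrow> fc (v, u) \<in> U" if "E u v" for u v
  proof -
    have "((fc (u, v) \<in> T) \<noteq> (fc (v, u) \<in> T)) = ((fc (u, v) \<in> T') \<noteq> (fc (v, u) \<in> T'))"
      using Phi_mem[OF that, of T] Phi_mem[OF that, of T'] eq by simp
    then show ?thesis by (auto simp: U_def symd_def)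
  qed
  have rotU: "fc (v, rot v w) \<in> U" if "E v w" "fc (v, w) \<in> U" for v w
  proof -
    have "fc (w, v) \<in> U" using Usym[OF that(1)] that(2) by simp
    then show ?thesis using fc_rev_step[OF Esym[OF that(1)]] by simp
  qed
  have allv: "fc (v, w') \<in> U" if a1: "E v w" and a2: "fc (v, w) \<in> U" and a3: "E v w'" for v w w'
  proof -
    have vV: "v \<in> V" using a1 EV by blast
    obtain n where n: "(rot v ^^ n) w = w'" using rot_reach[OF vV a1 a3] by blast
    have "(rot v ^^ n) w \<in> {u. E v u \<and> fc (v, u) \<in> U}"
      by (rule closed_iter) (use a1 a2 rotU rot_maps[OF vV] in auto)
    then show ?thesis using n by simp
  qed
  define good where "good v \<longleftrightarrow> (\<exists>w. E v w \<and> fc (v, w) \<in> U)" for v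
  have good_step: "good w" if "good v" "E v w" for v w
  proof -
    have "fc (v, w) \<in> U" using that allv unfolding good_def by blast
    then have "fc (w, v) \<in> U" using Usym[OF that(2)] by simp
    then show ?thesis using Esym[OF that(2)] unfolding good_def by blast
  qed
  have "U \<noteq> {}" using ne by (auto simp: U_def symd_def)
  then obtain f where f: "f \<in> U" by blast
  then have "f \<in> faces E rot" using TT by (auto simp: U_def symd_def)
  then obtain d1 where d1: "d1 \<in> D" "f = fc d1" using faces_eq by auto
  have g1: "good (fst d1)" using d1 f by (auto simp: good_def D_iff intro!: exI[of _ "snd d1"])
  have v1: "fst d1 \<in> V" using d1 EV by (auto simp: D_iff)
  have allgood: "good v" if "v \<in> V" for v
  proof -
    have "E\<^sup>*\<^sup>* (fst d1) v" using conn v1 that by (simp add: connected_graph_def)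
    then show ?thesis by (induction rule: rtranclp_induct) (use g1 good_step in auto)
  qed
  obtain d0 where d0: "d0 \<in> D" "f0 = fc d0" using f0 faces_eq by auto
  have "good (fst d0)" using allgood d0 EV by (auto simp: D_iff)
  then have "fc d0 \<in> U" using allv d0(1) unfolding good_def D_iff by (metis prod.collapse)
  then show False using d0 TT by (auto simp: U_def symd_def)
qed

lemma coloring: "\<exists>T. \<forall>u v. E u v \<longrightarrow> (((fc (u, v) \<in> T) \<noteq> (fc (v, u) \<in> T)) \<longleftrightarrow> (u \<notin> C \<and> v \<notin> C))"
proof -
  have Vne: "V \<noteq> {}" using conn by (simp add: connected_graph_def)
  then obtain v where v: "v \<in> V" by blast
  then have "nbrs E v \<noteq> {}" using card3[OF v] by auto
  then obtain w where "E v w" by (auto simp: nbrs_def)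
  then have "(v, w) \<in> D" by (simp add: D_iff)
  then have Fne: "faces E rot \<noteq> {}" using faces_eq by auto
  then obtain f0 where f0: "f0 \<in> faces E rot" by blast
  have finF: "finite (faces E rot)" using faces_eq finD by simp
  define F where "F = card (faces E rot)"
  have F1: "F \<ge> 1" using Fne finF by (simp add: F_def Suc_le_eq card_gt_0_iff)
  have V1: "card V \<ge> 1" using Vne finV by (simp add: Suc_le_eq card_gt_0_iff)
  have eul: "card Ed = (F - 1) + (card V - 1)" using euler F1 V1 by (simp add: F_def Ed_def)
  define P where "P = Pow (faces E rot - {f0})"
  have injP: "inj_on Phi P"
    by (rule inj_onI) (use Phi_inj_aux f0 in \<open>auto simp: P_def\<close>)
  have imgP: "Phi ` P \<subseteq> Zs" using Phi_Z by auto
  have cP: "card P = 2 ^ (F - 1)" using finF f0 by (simp add: P_def card_Pow F_def)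
  have finZ: "finite Zs"
  proof -
    have "Zs \<subseteq> Pow Ed" by (auto simp: Zs_def)
    then show ?thesis using finEd by (meson finite_Pow_iff finite_subset)
  qed
  have "card (Phi ` P) = 2 ^ (F - 1)" using card_image[OF injP] cP by simp
  moreover have "card Zs \<le> 2 ^ (F - 1)"
  proof -
    have "card Zs * 2 ^ (card V - 1) \<le> 2 ^ (F - 1) * 2 ^ (card V - 1)"
      using Zs_upper eul by (simp add: power_add)
    then show ?thesis by simp
  qed
  ultimately have "Phi ` P = Zs" using card_subset_eq[OF finZ imgP] card_mono[OF finZ imgP] by simp
  then obtain T where T: "Phi T = Xs" using Xs_Z by (metis imageE)
  show ?thesis
  proof (intro exI[of _ T] allI impI)
    fix u v assume "E u v"
    then show "((fc (u, v) \<in> T) \<noteq> (fc (v, u) \<in> T)) \<longleftrightarrow> (u \<notin> C \<and> v \<notin> C)"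
      using Phi_mem[of u v T] Xs_mem[of u v] T by simp
  qed
qed

end


context fl begin

lemma rv_rv: "rv (rv d) = d" by (simp add: rv_def)
lemma rv_D: "d \<in> D \<Longrightarrow> rv d \<in> D" by (simp add: rv_def D_iff Esym)
lemma Fd_rv: "Fd (rv d) = Fd d" by (auto simp: rv_def Fd_def)
lemma rv_ne: "d \<in> D \<Longrightarrow> rv d \<noteq> d" using Eirr by (auto simp: rv_def D_iff prod_eq_iff)
lemma XX_rv: "AA (rv d) = XX d" by (auto simp: XX_def AA_def Fd_rv rv_rv)
lemma inj_rv: "inj_on rv A" by (rule inj_onI) (metis rv_rv)

lemma face_ex: "f \<in> faces E rot \<Longrightarrow> \<exists>d. d \<in> D \<and> f = fc d"
  unfolding faces_eq by blast

lemma face_sum: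
  assumes Q: "Q \<subseteq> faces E rot"
  shows "card {d \<in> D. fc d \<in> Q \<and> P d} = (\<Sum>f\<in>Q. card {d \<in> f. P d})"
proof -
  have finF: "finite (faces E rot)" using faces_eq finD by simp
  have finQ: "finite Q" using Q finF finite_subset by auto
  have eq: "{d \<in> D. fc d \<in> Q \<and> P d} = (\<Union>f\<in>Q. {d \<in> f. P d})"
  proof
    show "{d \<in> D. fc d \<in> Q \<and> P d} \<subseteq> (\<Union>f\<in>Q. {d \<in> f. P d})" using fc_self by blast
    show "(\<Union>f\<in>Q. {d \<in> f. P d}) \<subseteq> {d \<in> D. fc d \<in> Q \<and> P d}"
    proof
      fix d assume "d \<in> (\<Union>f\<in>Q. {d \<in> f. P d})"
      then obtain f where f: "f \<in> Q" "d \<in> f" "P d" by blast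
      then obtain d' where d': "d' \<in> D" "f = fc d'" using Q face_ex by blast
      have "d \<in> D" using fc_sub[OF d'(1)] f d' by blast
      moreover have "fc d = f" using fc_mem[OF d'(1)] f d' by simp
      ultimately show "d \<in> {d \<in> D. fc d \<in> Q \<and> P d}" using f by simp
    qed
  qed
  have fin: "\<forall>f\<in>Q. finite {d \<in> f. P d}"
  proof
    fix f assume "f \<in> Q"
    then obtain d' where d': "d' \<in> D" "f = fc d'" using Q face_ex by blast
    then have "f \<subseteq> D" using fc_sub by simp
    then show "finite {d \<in> f. P d}" using finD by (simp add: finite_subset)
  qed
  have disj: "\<forall>f\<in>Q. \<forall>g\<in>Q. f \<noteq> g \<longrightarrow> {d \<in> f. P d} \<inter> {d \<in> g. P d} = {}"
  proof (intro ballI impI)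
    fix f g assume fg: "f \<in> Q" "g \<in> Q" "f \<noteq> g"
    obtain d1 where d1: "d1 \<in> D" "f = fc d1" using fg Q face_ex by blast
    obtain d2 where d2: "d2 \<in> D" "g = fc d2" using fg Q face_ex by blast
    show "{d \<in> f. P d} \<inter> {d \<in> g. P d} = {}"
    proof (rule ccontr)
      assume "{d \<in> f. P d} \<inter> {d \<in> g. P d} \<noteq> {}"
      then obtain d where dfg: "d \<in> f" "d \<in> g" by blast
      have "fc d = fc d1" using fc_mem[OF d1(1), of d] dfg(1) d1(2) by simp
      moreover have "fc d = fc d2" using fc_mem[OF d2(1), of d] dfg(2) d2(2) by simp
      ultimately show False using fg d1(2) d2(2) by simp
    qed
  qed
  show ?thesis unfolding eq using card_UN_disjoint[OF finQ fin disj] .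
qed

lemma VC_even: "even (card (V - C))"
proof -
  obtain T where col: "\<And>u v. E u v \<Longrightarrow> (((fc (u, v) \<in> T) \<noteq> (fc (v, u) \<in> T)) \<longleftrightarrow> (u \<notin> C \<and> v \<notin> C))"
    using coloring by blast
  have flip: "(fc (rv d) \<in> T) \<longleftrightarrow> ((fc d \<in> T) \<noteq> Fd d)" if "d \<in> D" for d
    using col[of "fst d" "snd d"] that by (auto simp: D_iff rv_def Fd_def)
  define Q where "Q = T \<inter> faces E rot"
  have Q: "Q \<subseteq> faces E rot" by (simp add: Q_def)
  have inQ: "fc d \<in> Q \<longleftrightarrow> fc d \<in> T" if "d \<in> D" for d
    using that faces_eq by (auto simp: Q_def)
  define W where "W = {d \<in> D. fc d \<in> T}"
  have finD': "finite {d \<in> D. P d}" for P using finD by simp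
  have FD: "{d \<in> D. Fd d} = Sigma (V - C) (\<lambda>u. nbrs E u - C)"
    using EV by (auto simp: D_iff Fd_def nbrs_def)
  have cFD: "card {d \<in> D. Fd d} = 2 * card (V - C)"
  proof -
    have "card (Sigma (V - C) (\<lambda>u. nbrs E u - C)) = (\<Sum>u\<in>V - C. card (nbrs E u - C))"
      using finV fin_nbrs by (simp add: card_SigmaI)
    also have "\<dots> = (\<Sum>u\<in>V - C. 2)" using leaf_nbrs2 by simp
    finally show ?thesis using FD by simp
  qed
  have imgF: "rv ` {d \<in> W. Fd d} = {d \<in> D - W. Fd d}"
  proof
    show "rv ` {d \<in> W. Fd d} \<subseteq> {d \<in> D - W. Fd d}"
      using flip rv_D Fd_rv by (auto simp: W_def)
    show "{d \<in> D - W. Fd d} \<subseteq> rv ` {d \<in> W. Fd d}"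
    proof
      fix d assume d: "d \<in> {d \<in> D - W. Fd d}"
      then have "rv d \<in> {d \<in> W. Fd d}" using flip[of d] rv_D Fd_rv by (auto simp: W_def)
      then show "d \<in> rv ` {d \<in> W. Fd d}" using rv_rv by (metis image_eqI)
    qed
  qed
  have c1: "card {d \<in> W. Fd d} = card {d \<in> D - W. Fd d}"
    using card_image[OF inj_rv] imgF by metis
  have "card {d \<in> D. Fd d} = card {d \<in> W. Fd d} + card {d \<in> D - W. Fd d}"
  proof -
    have "{d \<in> D. Fd d} = {d \<in> W. Fd d} \<union> {d \<in> D - W. Fd d}" by (auto simp: W_def)
    moreover have "{d \<in> W. Fd d} \<inter> {d \<in> D - W. Fd d} = {}" by auto
    moreover have "finite {d \<in> W. Fd d}" "finite {d \<in> D - W. Fd d}" using finD by (auto simp: W_def)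
    ultimately show ?thesis by (simp add: card_Un_disjoint)
  qed
  then have cWF: "card {d \<in> W. Fd d} = card (V - C)" using cFD c1 by simp
  have eS: "even (card {d \<in> W. \<not> Fd d})"
  proof (rule even_invol[where g = rv])
    show "finite {d \<in> W. \<not> Fd d}" using finD by (simp add: W_def)
    fix d assume d: "d \<in> {d \<in> W. \<not> Fd d}"
    then show "rv d \<in> {d \<in> W. \<not> Fd d}" using flip[of d] rv_D Fd_rv by (auto simp: W_def)
    show "rv (rv d) = d" by (rule rv_rv)
    show "rv d \<noteq> d" using d rv_ne by (auto simp: W_def)
  qed
  have cW: "card W = card {d \<in> W. Fd d} + card {d \<in> W. \<not> Fd d}"
  proof -
    have "W = {d \<in> W. Fd d} \<union> {d \<in> W. \<not> Fd d}" by auto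
    moreover have "finite {d \<in> W. Fd d}" "finite {d \<in> W. \<not> Fd d}" using finD by (auto simp: W_def)
    ultimately show ?thesis by (metis (no_types, lifting) card_Un_disjoint disjoint_iff mem_Collect_eq)
  qed
  have WP: "{d \<in> W. P d} = {d \<in> D. fc d \<in> Q \<and> P d}" for P using inQ by (auto simp: W_def)
  have fQ: "even (card f + card {d \<in> f. XX d} + card {d \<in> f. AA d})" "even (card {d \<in> f. AA d})"
    if hf: "f \<in> faces E rot" for f
  proof -
    obtain d0 where "d0 \<in> D" "f = fc d0" using hf face_ex by blast
    then show "even (card f + card {d \<in> f. XX d} + card {d \<in> f. AA d})" "even (card {d \<in> f. AA d})"
      using face_counts by auto
  qed
  have e5: "even (card W + card {d \<in> W. XX d} + card {d \<in> W. AA d})"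
  proof -
    have "card W = (\<Sum>f\<in>Q. card {d \<in> f. True})" using face_sum[OF Q, of "\<lambda>_. True"] WP[of "\<lambda>_. True"] by simp
    moreover have "card {d \<in> W. XX d} = (\<Sum>f\<in>Q. card {d \<in> f. XX d})" using face_sum[OF Q] WP by simp
    moreover have "card {d \<in> W. AA d} = (\<Sum>f\<in>Q. card {d \<in> f. AA d})" using face_sum[OF Q] WP by simp
    ultimately have "card W + card {d \<in> W. XX d} + card {d \<in> W. AA d}
       = (\<Sum>f\<in>Q. card f + card {d \<in> f. XX d} + card {d \<in> f. AA d})"
      by (simp add: sum.distrib)
    moreover have "even (\<Sum>f\<in>Q. card f + card {d \<in> f. XX d} + card {d \<in> f. AA d})"
      by (rule dvd_sum) (use fQ(1) Q in blast)
    ultimately show ?thesis by simp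
  qed
  have imgX: "rv ` {d \<in> W. XX d} = {d \<in> D - W. AA d}"
  proof
    show "rv ` {d \<in> W. XX d} \<subseteq> {d \<in> D - W. AA d}"
      using flip rv_D XX_rv by (auto simp: W_def XX_def)
    show "{d \<in> D - W. AA d} \<subseteq> rv ` {d \<in> W. XX d}"
    proof
      fix d assume d: "d \<in> {d \<in> D - W. AA d}"
      then have "rv d \<in> {d \<in> W. XX d}" using flip[of d] rv_D XX_rv[of "rv d"] rv_rv
        by (auto simp: W_def AA_def)
      then show "d \<in> rv ` {d \<in> W. XX d}" using rv_rv by (metis image_eqI)
    qed
  qed
  have c6: "card {d \<in> W. XX d} = card {d \<in> D - W. AA d}"
    using card_image[OF inj_rv] imgX by metis
  have e7: "even (card {d \<in> D. AA d})"
  proof -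
    have "{d \<in> D. AA d} = {d \<in> D. fc d \<in> faces E rot \<and> AA d}" using faces_eq by auto
    then have "card {d \<in> D. AA d} = (\<Sum>f\<in>faces E rot. card {d \<in> f. AA d})"
      using face_sum[of "faces E rot" AA] by simp
    moreover have "even (\<Sum>f\<in>faces E rot. card {d \<in> f. AA d})"
      by (rule dvd_sum) (use fQ(2) in blast)
    ultimately show ?thesis by simp
  qed
  have c8: "card {d \<in> D. AA d} = card {d \<in> W. AA d} + card {d \<in> D - W. AA d}"
  proof -
    have "{d \<in> D. AA d} = {d \<in> W. AA d} \<union> {d \<in> D - W. AA d}" by (auto simp: W_def)
    moreover have "{d \<in> W. AA d} \<inter> {d \<in> D - W. AA d} = {}" by auto
    moreover have "finite {d \<in> W. AA d}" "finite {d \<in> D - W. AA d}" using finD by (auto simp: W_def)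
    ultimately show ?thesis by (simp add: card_Un_disjoint)
  qed
  have "card W + card {d \<in> W. XX d} + card {d \<in> W. AA d} = card W + card {d \<in> D. AA d}"
    using c6 c8 by linarith
  then have "even (card W + card {d \<in> D. AA d})" using e5 by metis
  then have "even (card W)" using e7 by simp
  then show ?thesis using cW cWF eS by simp
qed

end

theorem mainTheorem11:
  fixes V :: "'a set" and E S :: "'a \<Rightarrow> 'a \<Rightarrow> bool"
  assumes "fullerene V E"
    and "perfect_star_packing V E S"
  shows "even (card {K \<in> components (V - centers V S) E.
                     is_cycle_comp K E \<and> odd (card K)})"
proof -
  obtain rot where sg: "simple_graph V E" and cg: "connected_graph V E" and cb: "cubic V E"
    and pe: "plane_embedding V E rot" and phf: "\<forall>f\<in>faces E rot. penta_hexa_face f"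
    using assms(1) unfolding fullerene_def by blast
  interpret fl V E S rot
    using sg cg cb pe phf assms(2) by (unfold_locales) (auto simp: plane_embedding_def)
  show ?thesis using reduce VC_even by blast
qed

end
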